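(* Let $n\ge 2$ and $\ln\hat q=[F_n(z_n)]^{-1}\ln z_n$. Then for every integer $2\le i\le n$, $$\frac{(\ln\hat q)_i}{\ln i}=\begin{cases}1,& i\text{ prime},\\0,& i\text{ not prime},\end{cases}$$ and consequently the number of primes $\le n$ is $\pi(n)=\sum_{i=2}^n \frac{(\ln\hat q)_i}{\ln i}$.
   Context: $z_n=(1,\dots,n)^T$; logarithms of vectors are entry-wise. For $1\le i\le n$, $e_{\bar i|n}\in\mathbb{R}^n$ has $k$-th entry $1$ if $i\mid k$, else $0$. For $2\le i\le n$, $f_{i|n}=\sum_{t=1}^{\lfloor \log_i n\rfloor} e_{\overline{i^t}|n}$, and $f_{1|n}=1_n$. $F_n(z_n)=[f_{1|n}\ \cdots\ f_{n|n}]\in\mathbb{R}^{n\times n}$, which is invertible. *)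

theory Defs
  imports "Jordan_Normal_Form.Gauss_Jordan_Elimination" "HOL-Computational_Algebra.Primes"
begin

(* Vectors/matrices use 0-based indices of Jordan_Normal_Form: the paper's
   k-th entry (1 <= k <= n) is stored at index k-1. *)

(* k-th entry of f_{i|n}: for i = 1 it is 1; for i >= 2 it is the number of
   t with 1 <= t <= floor(log_i n) and i^t dvd k  (t <= floor(log_i n) iff i^t <= n). *)
definition f_entry :: "nat \<Rightarrow> nat \<Rightarrow> nat \<Rightarrow> real" where
  "f_entry n i k = (if i = 1 then 1
     else real (card {t::nat. 1 \<le> t \<and> t \<le> nat \<lfloor>log (real i) (real n)\<rfloor> \<and> i ^ t dvd k}))"

definition F_mat :: "nat \<Rightarrow> real mat" where
  "F_mat n = mat n n (\<lambda>(r, c). f_entry n (c + 1) (r + 1))"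

definition ln_z :: "nat \<Rightarrow> real vec" where
  "ln_z n = vec n (\<lambda>k. ln (real (k + 1)))"

definition ln_qhat :: "nat \<Rightarrow> real vec" where
  "ln_qhat n = the (mat_inverse (F_mat n)) *\<^sub>v ln_z n"

end

theory Submission
  imports Defs "Jordan_Normal_Form.Determinant"
begin

lemma pow_le_floor_log:
  assumes "i \<ge> 2" "i ^ t \<le> n"
  shows "t \<le> nat \<lfloor>log (real i) (real n)\<rfloor>"
proof -
  have "real i ^ t \<le> real n" using assms(2) by (metis of_nat_le_iff of_nat_power)
  then have "real t \<le> log (real i) (real n)" by (rule le_log_of_power) (use assms(1) in simp)
  then have "int t \<le> \<lfloor>log (real i) (real n)\<rfloor>" by (simp add: le_floor_iff)
  then show ?thesis by simp
qed

lemma f_entry_prime: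
  assumes p: "prime p" and m: "1 \<le> m" "m \<le> n"
  shows "f_entry n p m = real (multiplicity p m)"
proof -
  have p1: "p \<noteq> 1" "p \<ge> 2" using p prime_ge_2_nat by auto
  have pw: "\<And>t. p ^ t dvd m \<longleftrightarrow> t \<le> multiplicity p m"
    using power_dvd_iff_le_multiplicity[of m p] m p p1 by (auto simp add: not_prime_unit)
  have "{t::nat. 1 \<le> t \<and> t \<le> nat \<lfloor>log (real p) (real n)\<rfloor> \<and> p ^ t dvd m} = {1..multiplicity p m}"
  proof (rule Set.set_eqI, rule iffI)
    fix t assume "t \<in> {t. 1 \<le> t \<and> t \<le> nat \<lfloor>log (real p) (real n)\<rfloor> \<and> p ^ t dvd m}"
    then show "t \<in> {1..multiplicity p m}" by (auto simp: pw)
  next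
    fix t assume "t \<in> {1..multiplicity p m}"
    then have t: "1 \<le> t" "t \<le> multiplicity p m" by auto
    then have d: "p ^ t dvd m" by (simp add: pw)
    then have "p ^ t \<le> m" using m by (simp add: dvd_imp_le)
    then have "t \<le> nat \<lfloor>log (real p) (real n)\<rfloor>" using p1 m by (intro pow_le_floor_log) auto
    with t d show "t \<in> {t. 1 \<le> t \<and> t \<le> nat \<lfloor>log (real p) (real n)\<rfloor> \<and> p ^ t dvd m}" by auto
  qed
  then show ?thesis unfolding f_entry_def using p1 by simp
qed

lemma ln_nat_factor:
  assumes "(m::nat) \<ge> 1"
  shows "ln (real m) = (\<Sum>p\<in>prime_factors m. real (multiplicity p m) * ln (real p))"
proof -
  have "real m = real (\<Prod>p \<in> prime_factors m. p ^ multiplicity p m)"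
    using prod_prime_factors[of m] assms by simp
  also have "\<dots> = (\<Prod>p \<in> prime_factors m. real p ^ multiplicity p m)" by simp
  finally have "ln (real m) = ln (\<Prod>p \<in> prime_factors m. real p ^ multiplicity p m)" by simp
  also have "\<dots> = (\<Sum>p\<in>prime_factors m. ln (real p ^ multiplicity p m))"
    by (rule ln_prod) (auto dest: in_prime_factors_imp_prime simp: prime_gt_0_nat)
  also have "\<dots> = (\<Sum>p\<in>prime_factors m. real (multiplicity p m) * ln (real p))"
    by (intro sum.cong refl) (auto dest!: in_prime_factors_imp_prime simp: ln_realpow prime_gt_0_nat)
  finally show ?thesis .
qed


lemma F_carrier: "F_mat n \<in> carrier_mat n n" by (simp add: F_mat_def)

lemma F_upper_zero:
  assumes "i < j" "j < n"
  shows "F_mat n $$ (i, j) = 0"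
proof -
  have "{t::nat. 1 \<le> t \<and> t \<le> nat \<lfloor>log (real (j+1)) (real n)\<rfloor> \<and> (j+1) ^ t dvd (i+1)} = {}"
  proof (rule ccontr)
    assume "\<not> ?thesis"
    then obtain t where t: "1 \<le> t" "(j+1) ^ t dvd (i+1)" by auto
    then have "(j+1) ^ t \<le> i + 1" by (simp add: dvd_imp_le)
    moreover have "j + 1 \<le> (j+1) ^ t" using t(1)
      by (metis One_nat_def le_add2 power_increasing power_one_right)
    ultimately show False using assms by simp
  qed
  then show ?thesis using assms unfolding F_mat_def f_entry_def by simp
qed

lemma F_diag:
  assumes "i < n"
  shows "F_mat n $$ (i, i) = 1"
proof (cases "i = 0")
  case True then show ?thesis using assms unfolding F_mat_def f_entry_def by simp
next
  case False
  have ge: "i + 1 \<ge> 2" using False by simp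
  have L: "1 \<le> nat \<lfloor>log (real (i+1)) (real n)\<rfloor>"
    using pow_le_floor_log[OF ge, of 1 n] assms by simp
  have "{t::nat. 1 \<le> t \<and> t \<le> nat \<lfloor>log (real (i+1)) (real n)\<rfloor> \<and> (i+1) ^ t dvd (i+1)} = {1}"
  proof (rule Set.set_eqI, rule iffI)
    fix t assume "t \<in> {t::nat. 1 \<le> t \<and> t \<le> nat \<lfloor>log (real (i+1)) (real n)\<rfloor> \<and> (i+1) ^ t dvd (i+1)}"
    then have t: "1 \<le> t" "(i+1) ^ t dvd (i+1)" by auto
    then have le: "(i+1) ^ t \<le> (i+1) ^ 1" by (simp add: dvd_imp_le)
    have "t \<le> 1" using power_le_imp_le_exp[OF _ le] ge by simp
    with t show "t \<in> {1}" by simp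
  next
    fix t assume "t \<in> {1::nat}"
    then show "t \<in> {t::nat. 1 \<le> t \<and> t \<le> nat \<lfloor>log (real (i+1)) (real n)\<rfloor> \<and> (i+1) ^ t dvd (i+1)}"
      using L by simp
  qed
  then show ?thesis using assms False unfolding F_mat_def f_entry_def by simp
qed

lemma F_det: "det (F_mat n) = 1"
proof -
  have "det (F_mat n) = prod_list (diag_mat (F_mat n))"
    by (rule det_lower_triangular[OF _ F_carrier]) (rule F_upper_zero)
  also have "\<dots> = (\<Prod> i = 0 ..< n. F_mat n $$ (i,i))"
    by (simp add: prod_list_diag_prod F_mat_def)
  also have "\<dots> = 1" by (intro prod.neutral) (simp add: F_diag)
  finally show ?thesis .
qed

definition xq :: "nat \<Rightarrow> real vec" where
  "xq n = vec n (\<lambda>k. if prime (k+1) then ln (real (k+1)) else 0)"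

lemma F_xq: "F_mat n *\<^sub>v xq n = ln_z n"
proof (rule eq_vecI)
  show "dim_vec (F_mat n *\<^sub>v xq n) = dim_vec (ln_z n)" by (simp add: F_mat_def ln_z_def)
  fix k assume "k < dim_vec (ln_z n)"
  then have k: "k < n" by (simp add: ln_z_def)
  define m where "m = k + 1"
  have m: "1 \<le> m" "m \<le> n" using k m_def by auto
  have "(F_mat n *\<^sub>v xq n) $ k = (\<Sum>j\<in>{0..<n}. f_entry n (j+1) m * (if prime (j+1) then ln (real (j+1)) else 0))"
    using k by (simp add: F_mat_def xq_def scalar_prod_def m_def)
  also have "\<dots> = (\<Sum>j\<in>{0..<n}. (\<lambda>p. if prime p then real (multiplicity p m) * ln (real p) else 0) (Suc j))"
    by (intro sum.cong refl) (auto simp: f_entry_prime[OF _ m])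
  also have "\<dots> = (\<Sum>p\<in>{1..n}. if prime p then real (multiplicity p m) * ln (real p) else 0)"
  proof -
    have eq: "{1..n} = Suc ` {0..<n}" by (auto simp: image_iff)
    show ?thesis unfolding eq by (subst sum.reindex) (auto intro: inj_onI)
  qed
  also have "\<dots> = (\<Sum>p\<in>prime_factors m. real (multiplicity p m) * ln (real p))"
  proof (rule sum.mono_neutral_cong_right)
    show "prime_factors m \<subseteq> {1..n}"
    proof
      fix p assume p: "p \<in> prime_factors m"
      then have "p dvd m" "prime p" by (auto simp: in_prime_factors_iff)
      then show "p \<in> {1..n}" using m using dvd_imp_le[of p m] by (auto simp: prime_gt_0_nat Suc_leI)
    qed
    show "\<forall>p\<in>{1..n} - prime_factors m. (if prime p then real (multiplicity p m) * ln (real p) else 0) = 0"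
      using m by (auto simp: in_prime_factors_iff not_dvd_imp_multiplicity_0)
  qed (auto simp: in_prime_factors_iff)
  also have "\<dots> = ln (real m)" using ln_nat_factor[of m] m by simp
  also have "\<dots> = ln_z n $ k" using k by (simp add: ln_z_def m_def)
  finally show "(F_mat n *\<^sub>v xq n) $ k = ln_z n $ k" .
qed

lemma ln_qhat_eq: "ln_qhat n = xq n"
proof -
  have "F_mat n \<in> Units (ring_mat TYPE(real) n ())"
    by (rule det_non_zero_imp_unit[OF F_carrier]) (simp add: F_det)
  then obtain B where B: "mat_inverse (F_mat n) = Some B"
    using mat_inverse(1)[OF F_carrier, where b="()"] by (cases "mat_inverse (F_mat n)") auto
  from mat_inverse(2)[OF F_carrier B] have BF: "B * F_mat n = 1\<^sub>m n" and Bc: "B \<in> carrier_mat n n" by auto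
  have xc: "xq n \<in> carrier_vec n" by (simp add: xq_def)
  have "ln_qhat n = B *\<^sub>v (F_mat n *\<^sub>v xq n)" by (simp add: ln_qhat_def B F_xq)
  also have "\<dots> = (B * F_mat n) *\<^sub>v xq n" by (rule assoc_mult_mat_vec[symmetric, OF Bc F_carrier xc])
  also have "\<dots> = xq n" using BF xc by simp
  finally show ?thesis .
qed

theorem mainTheorem8:
  fixes n :: nat
  assumes "n \<ge> 2"
  shows "(\<forall>i\<in>{2..n}. ln_qhat n $ (i - 1) / ln (real i) = (if prime i then 1 else 0))
         \<and> real (card {p::nat. prime p \<and> p \<le> n}) = (\<Sum>i=2..n. ln_qhat n $ (i - 1) / ln (real i))"
proof -
  have A: "\<forall>i\<in>{2..n}. ln_qhat n $ (i - 1) / ln (real i) = (if prime i then 1 else 0)"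
  proof
    fix i assume i: "i \<in> {2..n}"
    then have "ln (real i) \<noteq> 0" by simp
    moreover have "ln_qhat n $ (i - 1) = (if prime i then ln (real i) else 0)"
    proof -
      have "i - 1 < n" "Suc (i - 1) = i" "i - 1 + 1 = i" using i by auto
      then show ?thesis by (simp add: ln_qhat_eq xq_def)
    qed
    ultimately show "ln_qhat n $ (i - 1) / ln (real i) = (if prime i then 1 else 0)" by simp
  qed
  have "(\<Sum>i=2..n. ln_qhat n $ (i - 1) / ln (real i)) = (\<Sum>i=2..n. (if prime i then 1 else 0::real))"
    using A by (intro sum.cong) auto
  also have "\<dots> = real (card ({2..n} \<inter> Collect prime))"
    by (simp add: sum.If_cases)
  also have "{2..n} \<inter> Collect prime = {p::nat. prime p \<and> p \<le> n}"
    by (auto dest: prime_ge_2_nat)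
  finally show ?thesis using A by simp
qed

end
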